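(* Let $\Gamma$ be a finitely generated group which is quasi-isometric to the hyperbolic plane $\mathcal H=\{z\in\mathbb C:\operatorname{Im}z>0\}$ with its hyperbolic metric. Then $\Gamma$ is extraterrestrial.
   Context: $\Gamma$ carries the word metric of a finite generating set. A finitely generated group is extraterrestrial if its Cayley graph with respect to some (equivalently any) finite symmetric generating set is extraterrestrial, where a graph $G=(V,E)$ is extraterrestrial if for every $m$ there is $k$ such that for every $r$ there is a triple $(U,F,O)$ of pairwise disjoint finite vertex sets with $U\neq\emptyset$, $|U|\ge m|F|$, a bijection $\mu:U\to O$ with $d_G(u,\mu(u))\le k$, and every path from $U$ to $O$ either contains a vertex of $F$ or has length at least $r$. *)

theory Defs
  imports Complex_Main "HOL-Algebra.Generated_Groups" "HOL-Library.Extended_Nat"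
begin

definition is_path :: "'v set \<Rightarrow> ('v \<Rightarrow> 'v \<Rightarrow> bool) \<Rightarrow> 'v list \<Rightarrow> bool" where
  "is_path V E p \<longleftrightarrow> p \<noteq> [] \<and> set p \<subseteq> V \<and>
     (\<forall>i. Suc i < length p \<longrightarrow> E (p ! i) (p ! Suc i))"

definition path_length :: "'v list \<Rightarrow> nat" where
  "path_length p = length p - 1"

text \<open>Graph distance (infinite if no path exists).\<close>
definition graph_dist :: "'v set \<Rightarrow> ('v \<Rightarrow> 'v \<Rightarrow> bool) \<Rightarrow> 'v \<Rightarrow> 'v \<Rightarrow> enat" where
  "graph_dist V E u v =
     (INF p \<in> {p. is_path V E p \<and> hd p = u \<and> last p = v}. enat (path_length p))"

definition extraterrestrial_graph :: "'v set \<Rightarrow> ('v \<Rightarrow> 'v \<Rightarrow> bool) \<Rightarrow> bool" where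
  "extraterrestrial_graph V E \<longleftrightarrow>
    (\<forall>m::nat. \<exists>k::nat. \<forall>r::nat. \<exists>U F Ou (\<mu> :: 'v \<Rightarrow> 'v).
       U \<subseteq> V \<and> F \<subseteq> V \<and> Ou \<subseteq> V \<and> finite U \<and> finite F \<and> finite Ou \<and>
       U \<inter> F = {} \<and> U \<inter> Ou = {} \<and> F \<inter> Ou = {} \<and>
       U \<noteq> {} \<and> card U \<ge> m * card F \<and>
       bij_betw \<mu> U Ou \<and> (\<forall>u\<in>U. graph_dist V E u (\<mu> u) \<le> enat k) \<and>
       (\<forall>p. is_path V E p \<and> hd p \<in> U \<and> last p \<in> Ou \<longrightarrow>
              set p \<inter> F \<noteq> {} \<or> path_length p \<ge> r))"

definition finite_symm_gen_set :: "('a, 'b) monoid_scheme \<Rightarrow> 'a set \<Rightarrow> bool" where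
  "finite_symm_gen_set G S \<longleftrightarrow> finite S \<and> S \<subseteq> carrier G \<and>
     (\<forall>s\<in>S. inv\<^bsub>G\<^esub> s \<in> S) \<and> generate G S = carrier G"

definition cayley_edge :: "('a, 'b) monoid_scheme \<Rightarrow> 'a set \<Rightarrow> 'a \<Rightarrow> 'a \<Rightarrow> bool" where
  "cayley_edge G S x y \<longleftrightarrow> (\<exists>s\<in>S. y = x \<otimes>\<^bsub>G\<^esub> s)"

text \<open>Word metric: graph distance in the Cayley graph (finite since S generates).\<close>
definition word_dist :: "('a, 'b) monoid_scheme \<Rightarrow> 'a set \<Rightarrow> 'a \<Rightarrow> 'a \<Rightarrow> real" where
  "word_dist G S x y = real (the_enat (graph_dist (carrier G) (cayley_edge G S) x y))"

definition finitely_generated_group :: "('a, 'b) monoid_scheme \<Rightarrow> bool" where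
  "finitely_generated_group G \<longleftrightarrow> group G \<and> (\<exists>S. finite_symm_gen_set G S)"

definition extraterrestrial_group :: "('a, 'b) monoid_scheme \<Rightarrow> bool" where
  "extraterrestrial_group G \<longleftrightarrow>
     (\<exists>S. finite_symm_gen_set G S \<and> extraterrestrial_graph (carrier G) (cayley_edge G S))"

definition quasi_isometric ::
  "'a set \<Rightarrow> ('a \<Rightarrow> 'a \<Rightarrow> real) \<Rightarrow> 'c set \<Rightarrow> ('c \<Rightarrow> 'c \<Rightarrow> real) \<Rightarrow> bool" where
  "quasi_isometric X dX Y dY \<longleftrightarrow>
     (\<exists>f L C. f ` X \<subseteq> Y \<and> L \<ge> 1 \<and> C \<ge> 0 \<and>
        (\<forall>x\<in>X. \<forall>x'\<in>X. dX x x' / L - C \<le> dY (f x) (f x') \<and>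
                          dY (f x) (f x') \<le> L * dX x x' + C) \<and>
        (\<forall>y\<in>Y. \<exists>x\<in>X. dY (f x) y \<le> C))"

definition upper_half_plane :: "complex set" where
  "upper_half_plane = {z. Im z > 0}"

definition hyp_dist :: "complex \<Rightarrow> complex \<Rightarrow> real" where
  "hyp_dist z w = arcosh (1 + (cmod (z - w))\<^sup>2 / (2 * Im z * Im w))"

end

theory Submission
  imports Defs
begin


definition hq :: "complex \<Rightarrow> complex \<Rightarrow> real" where
  "hq z w = (cmod (z - w))\<^sup>2 / (2 * Im z * Im w)"

lemma hq_expand: "hq z w = ((Re z - Re w)\<^sup>2 + (Im z - Im w)\<^sup>2) / (2 * Im z * Im w)"
  unfolding hq_def by (simp add: cmod_power2)

lemma hq_nonneg: "Im z > 0 \<Longrightarrow> Im w > 0 \<Longrightarrow> hq z w \<ge> 0"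
  unfolding hq_def by simp

lemma hyp_le_iff:
  assumes "Im z > 0" "Im w > 0" "A \<ge> 0"
  shows "hyp_dist z w \<le> A \<longleftrightarrow> hq z w \<le> cosh A - 1"
proof -
  have q: "1 + hq z w \<ge> 1" using hq_nonneg[OF assms(1,2)] by simp
  have hd: "hyp_dist z w = arcosh (1 + hq z w)" unfolding hyp_dist_def hq_def by simp
  have "arcosh (1 + hq z w) \<le> A \<longleftrightarrow> cosh (arcosh (1 + hq z w)) \<le> cosh A"
    using cosh_real_nonneg_le_iff[of "arcosh (1 + hq z w)" A] q assms(3) by simp
  also have "\<dots> \<longleftrightarrow> 1 + hq z w \<le> cosh A" using q by simp
  finally show ?thesis using hd by linarith
qed

lemma close_aux:
  fixes x x' y y' q :: real
  assumes "y > 0" "y' > 0" "q \<ge> 0"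
    and "((x - x')\<^sup>2 + (y - y')\<^sup>2) / (2 * y * y') \<le> q"
  shows "y' \<le> (2 + 8*q) * y \<and> \<bar>x - x'\<bar> \<le> (2 + 10*q) * y"
proof -
  have pos: "0 < 2 * y * y'" using assms by simp
  have h: "(x - x')\<^sup>2 + (y - y')\<^sup>2 \<le> q * (2 * y * y')"
    using assms(4) pos_divide_le_eq[OF pos] by blast
  have qy: "0 \<le> q * y" using assms by simp
  have y1: "y' \<le> (2 + 8*q) * y"
  proof (rule ccontr)
    assume "\<not> ?thesis"
    hence a: "y' > (2 + 8*q) * y" by simp
    hence b: "y' - y \<ge> y' / 2" using qy by (simp add: algebra_simps)
    have c: "(y' / 2)\<^sup>2 \<le> (y' - y)\<^sup>2"
      by (rule power_mono[OF b]) (use assms in simp)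
    have d: "(y' - y)\<^sup>2 = (y - y')\<^sup>2" by (simp add: power2_commute)
    have e: "(y'/2)\<^sup>2 \<le> q * (2 * y * y')" using h c d
      by (smt (verit) zero_le_power2)
    hence "y' * y' \<le> (8 * q * y) * y'" by (simp add: power2_eq_square algebra_simps)
    hence "y' \<le> 8 * q * y" using assms(2) by simp
    thus False using a qy assms(1) by (simp add: algebra_simps)
  qed
  have "(x - x')\<^sup>2 \<le> q * (2 * y * y')" using h by (smt (verit) zero_le_power2)
  also have "\<dots> \<le> q * (2 * y * ((2 + 8*q) * y))"
    using y1 assms by (simp add: mult_left_mono)
  also have "\<dots> \<le> ((2 + 10*q) * y)\<^sup>2"
  proof -
    have "q * (2 * y * ((2 + 8*q) * y)) = (4*q + 16*q*q) * (y*y)" by (simp add: algebra_simps)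
    also have "\<dots> \<le> (4 + 40*q + 100*q*q) * (y*y)"
      using assms by (intro mult_right_mono) auto
    also have "\<dots> = ((2 + 10*q) * y)\<^sup>2" by (simp add: power2_eq_square algebra_simps)
    finally show ?thesis .
  qed
  finally have "(x - x')\<^sup>2 \<le> ((2 + 10*q) * y)\<^sup>2" .
  hence "\<bar>x - x'\<bar> \<le> \<bar>(2 + 10*q) * y\<bar>" using abs_le_square_iff by blast
  thus ?thesis using y1 assms by simp
qed

lemma close:
  assumes "Im z > 0" "Im w > 0" "q \<ge> 0" "hq z w \<le> q"
  shows "Im w \<le> (2 + 8*q) * Im z" "Im z \<le> (2 + 8*q) * Im w"
    "\<bar>Re z - Re w\<bar> \<le> (2 + 10*q) * Im z" "\<bar>Re z - Re w\<bar> \<le> (2 + 10*q) * Im w"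
proof -
  have a: "((Re z - Re w)\<^sup>2 + (Im z - Im w)\<^sup>2) / (2 * Im z * Im w) \<le> q"
    using assms(4) by (simp add: hq_expand)
  have b: "((Re w - Re z)\<^sup>2 + (Im w - Im z)\<^sup>2) / (2 * Im w * Im z) \<le> q"
    using a by (simp add: power2_commute mult.commute mult.left_commute)
  from close_aux[OF assms(1,2,3) a] close_aux[OF assms(2,1,3) b]
  show "Im w \<le> (2 + 8*q) * Im z" "Im z \<le> (2 + 8*q) * Im w"
    "\<bar>Re z - Re w\<bar> \<le> (2 + 10*q) * Im z" "\<bar>Re z - Re w\<bar> \<le> (2 + 10*q) * Im w"
    by (auto simp: abs_minus_commute)
qed



lemma is_path_single[simp]: "is_path V E [a] \<longleftrightarrow> a \<in> V"
  unfolding is_path_def by auto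

lemma is_path_cons2[simp]:
  "is_path V E (a # b # p) \<longleftrightarrow> a \<in> V \<and> E a b \<and> is_path V E (b # p)"
proof
  assume h: "is_path V E (a # b # p)"
  have h3: "\<And>i. Suc i < length (a # b # p) \<Longrightarrow> E ((a # b # p) ! i) ((a # b # p) ! Suc i)"
    using h unfolding is_path_def by blast
  have "E a b" using h3[of 0] by simp
  moreover have "is_path V E (b # p)" unfolding is_path_def
  proof (intro conjI allI impI)
    fix i assume "Suc i < length (b # p)"
    thus "E ((b # p) ! i) ((b # p) ! Suc i)" using h3[of "Suc i"] by simp
  qed (use h in \<open>auto simp: is_path_def\<close>)
  ultimately show "a \<in> V \<and> E a b \<and> is_path V E (b # p)" using h unfolding is_path_def by auto
next
  assume h: "a \<in> V \<and> E a b \<and> is_path V E (b # p)"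
  show "is_path V E (a # b # p)" unfolding is_path_def
  proof (intro conjI allI impI)
    fix i assume i: "Suc i < length (a # b # p)"
    show "E ((a # b # p) ! i) ((a # b # p) ! Suc i)"
    proof (cases i)
      case 0 then show ?thesis using h by simp
    next
      case (Suc j) then show ?thesis using h i unfolding is_path_def by auto
    qed
  qed (use h in \<open>auto simp: is_path_def\<close>)
qed

lemma is_path_append:
  "is_path V E p \<Longrightarrow> is_path V E q \<Longrightarrow> last p = hd q \<Longrightarrow>
   is_path V E (p @ tl q) \<and> hd (p @ tl q) = hd p \<and> last (p @ tl q) = last q
   \<and> path_length (p @ tl q) = path_length p + path_length q"
proof (induction p)
  case Nil then show ?case by (simp add: is_path_def)
next
  case (Cons a p)
  show ?case
  proof (cases p)
    case Nil
    then show ?thesis using Cons.prems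
      by (cases q) (auto simp: path_length_def is_path_def)
  next
    case (Cons b p')
    have ip: "is_path V E p" using Cons.prems(1) \<open>p = b # p'\<close> by simp
    have IH: "is_path V E (p @ tl q) \<and> hd (p @ tl q) = hd p \<and> last (p @ tl q) = last q
       \<and> path_length (p @ tl q) = path_length p + path_length q"
      using Cons.IH[OF ip Cons.prems(2)] Cons.prems(3) \<open>p = b # p'\<close> by simp
    have "is_path V E (a # (p @ tl q))"
      using IH Cons.prems(1) \<open>p = b # p'\<close> by simp
    moreover have "last ((a # p) @ tl q) = last q" using IH \<open>p = b # p'\<close> by simp
    moreover have "path_length ((a # p) @ tl q) = path_length (a # p) + path_length q"
      using IH \<open>p = b # p'\<close> Cons.prems(2) unfolding path_length_def
      by (cases q) (auto simp: is_path_def)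
    ultimately show ?thesis by simp
  qed
qed

lemma graph_dist_le_path:
  "is_path V E p \<Longrightarrow> graph_dist V E (hd p) (last p) \<le> enat (path_length p)"
  unfolding graph_dist_def by (rule INF_lower) auto

lemma graph_dist_attained:
  assumes "graph_dist V E u v \<noteq> \<infinity>"
  shows "\<exists>p. is_path V E p \<and> hd p = u \<and> last p = v \<and> graph_dist V E u v = enat (path_length p)"
proof -
  let ?P = "{p. is_path V E p \<and> hd p = u \<and> last p = v}"
  let ?A = "(\<lambda>p. enat (path_length p)) ` ?P"
  have ne: "?A \<noteq> {}"
  proof
    assume "?A = {}"
    hence "graph_dist V E u v = Inf {}" unfolding graph_dist_def by metis
    thus False using assms by (simp add: top_enat_def)
  qed
  have "graph_dist V E u v = Inf ?A" unfolding graph_dist_def by (rule refl)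
  also have "Inf ?A = (LEAST x. x \<in> ?A)"
    unfolding Inf_enat_def using ne by (rule if_not_P)
  finally have 1: "graph_dist V E u v = (LEAST x. x \<in> ?A)" .
  obtain a where a: "a \<in> ?A" using ne by blast
  have "(LEAST x. x \<in> ?A) \<in> ?A" by (rule LeastI[of "\<lambda>x. x \<in> ?A", OF a])
  with 1
  show ?thesis by auto
qed

primrec reach :: "('a, 'b) monoid_scheme \<Rightarrow> 'a set \<Rightarrow> 'a \<Rightarrow> nat \<Rightarrow> 'a set" where
  "reach G S g 0 = {g}"
| "reach G S g (Suc n) = reach G S g n \<union> (\<Union>x\<in>reach G S g n. (\<lambda>s. x \<otimes>\<^bsub>G\<^esub> s) ` S)"

lemma reach_finite_card:
  assumes "finite S"
  shows "finite (reach G S g n) \<and> card (reach G S g n) \<le> (card S + 1) ^ n"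
proof (induction n)
  case 0 then show ?case by simp
next
  case (Suc n)
  let ?A = "reach G S g n"
  have fA: "finite ?A" using Suc by simp
  have f2: "finite (\<Union>x\<in>?A. (\<lambda>s. x \<otimes>\<^bsub>G\<^esub> s) ` S)" using fA assms by simp
  have "card (\<Union>x\<in>?A. (\<lambda>s. x \<otimes>\<^bsub>G\<^esub> s) ` S) \<le> (\<Sum>x\<in>?A. card ((\<lambda>s. x \<otimes>\<^bsub>G\<^esub> s) ` S))"
    by (rule card_UN_le[OF fA])
  also have "\<dots> \<le> (\<Sum>x\<in>?A. card S)" by (intro sum_mono card_image_le[OF assms])
  also have "\<dots> = card ?A * card S" by simp
  finally have c2: "card (\<Union>x\<in>?A. (\<lambda>s. x \<otimes>\<^bsub>G\<^esub> s) ` S) \<le> card ?A * card S" .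
  have "card (reach G S g (Suc n)) \<le> card ?A + card ?A * card S"
    using card_Un_le[of ?A "(\<Union>x\<in>?A. (\<lambda>s. x \<otimes>\<^bsub>G\<^esub> s) ` S)"] c2 by simp
  also have "\<dots> = card ?A * (card S + 1)" by (simp add: algebra_simps)
  also have "\<dots> \<le> (card S + 1) ^ n * (card S + 1)" using Suc by (intro mult_right_mono) auto
  also have "\<dots> = (card S + 1) ^ Suc n" by simp
  finally show ?case using fA f2 by simp
qed

lemma reach_mono: "m \<le> n \<Longrightarrow> reach G S g m \<subseteq> reach G S g n"
proof (induction n)
  case 0 then show ?case by simp
next
  case (Suc n)
  then show ?case by (cases "m = Suc n") auto
qed

locale cay =
  fixes G :: "('a, 'b) monoid_scheme" and S :: "'a set"
  assumes grp: "group G" and gen: "finite_symm_gen_set G S"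
begin

abbreviation "V \<equiv> carrier G"
abbreviation "E \<equiv> cayley_edge G S"

lemma S_sub: "S \<subseteq> carrier G" and S_fin: "finite S"
  and S_inv: "s \<in> S \<Longrightarrow> inv\<^bsub>G\<^esub> s \<in> S" and S_gen: "generate G S = carrier G"
  using gen unfolding finite_symm_gen_set_def by auto

lemma path_gen:
  assumes "h \<in> generate G S"
  shows "x \<in> carrier G \<Longrightarrow> \<exists>p. is_path V E p \<and> hd p = x \<and> last p = x \<otimes>\<^bsub>G\<^esub> h"
  using assms
proof (induction arbitrary: x rule: generate.induct)
  case one
  then show ?case using group.is_monoid[OF grp] by (intro exI[of _ "[x]"]) (simp add: monoid.r_one)
next
  case (incl h)
  have "h \<in> carrier G" using incl S_sub by auto
  hence "x \<otimes>\<^bsub>G\<^esub> h \<in> carrier G" using incl group.is_monoid[OF grp] by (simp add: monoid.m_closed)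
  then show ?case using incl
    by (intro exI[of _ "[x, x \<otimes>\<^bsub>G\<^esub> h]"]) (auto simp: cayley_edge_def)
next
  case (inv h)
  have hi: "inv\<^bsub>G\<^esub> h \<in> S" using S_inv inv by auto
  have "inv\<^bsub>G\<^esub> h \<in> carrier G" using hi S_sub by auto
  hence "x \<otimes>\<^bsub>G\<^esub> inv\<^bsub>G\<^esub> h \<in> carrier G" using inv group.is_monoid[OF grp] by (simp add: monoid.m_closed)
  then show ?case using inv hi
    by (intro exI[of _ "[x, x \<otimes>\<^bsub>G\<^esub> inv\<^bsub>G\<^esub> h]"]) (auto simp: cayley_edge_def)
next
  case (eng h1 h2)
  have c1: "h1 \<in> carrier G" "h2 \<in> carrier G" using eng S_gen by auto
  obtain p1 where p1: "is_path V E p1" "hd p1 = x" "last p1 = x \<otimes>\<^bsub>G\<^esub> h1" using eng by blast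
  have xh: "x \<otimes>\<^bsub>G\<^esub> h1 \<in> carrier G" using c1 eng group.is_monoid[OF grp] by (simp add: monoid.m_closed)
  obtain p2 where p2: "is_path V E p2" "hd p2 = x \<otimes>\<^bsub>G\<^esub> h1"
     "last p2 = (x \<otimes>\<^bsub>G\<^esub> h1) \<otimes>\<^bsub>G\<^esub> h2" using eng.IH(2)[OF xh] by blast
  have "(x \<otimes>\<^bsub>G\<^esub> h1) \<otimes>\<^bsub>G\<^esub> h2 = x \<otimes>\<^bsub>G\<^esub> (h1 \<otimes>\<^bsub>G\<^esub> h2)"
    using c1 eng group.is_monoid[OF grp] by (simp add: monoid.m_assoc)
  then show ?case using is_path_append[OF p1(1) p2(1)] p1 p2 by metis
qed

lemma dist_fin:
  assumes "x \<in> carrier G" "y \<in> carrier G"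
  shows "\<exists>n. graph_dist V E x y = enat n"
proof -
  have h: "inv\<^bsub>G\<^esub> x \<otimes>\<^bsub>G\<^esub> y \<in> generate G S" using assms S_gen grp
    by (simp add: group.inv_closed monoid.m_closed group.is_monoid)
  have eq: "x \<otimes>\<^bsub>G\<^esub> (inv\<^bsub>G\<^esub> x \<otimes>\<^bsub>G\<^esub> y) = y"
    using assms grp by (simp add: group.inv_solve_left' group.r_inv monoid.m_assoc[symmetric] group.is_monoid group.inv_closed)
  obtain p where p: "is_path V E p" "hd p = x" "last p = y" using path_gen[OF h assms(1)] eq by metis
  have "graph_dist V E x y \<le> enat (path_length p)" using graph_dist_le_path[OF p(1)] p by simp
  thus ?thesis using enat_ile by blast
qed

lemma word_dist_eq: "graph_dist V E x y = enat n \<Longrightarrow> word_dist G S x y = real n"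
  unfolding word_dist_def by simp

lemma word_le_graph:
  assumes "x \<in> carrier G" "y \<in> carrier G" "word_dist G S x y \<le> R"
  shows "graph_dist V E x y \<le> enat (nat \<lceil>R\<rceil>)"
proof -
  obtain n where n: "graph_dist V E x y = enat n" using dist_fin[OF assms(1,2)] by blast
  have "real n \<le> R" using word_dist_eq[OF n] assms(3) by simp
  hence "n \<le> nat \<lceil>R\<rceil>" by linarith
  thus ?thesis using n by simp
qed

lemma path_step_word:
  assumes "is_path V E p" "Suc i < length p"
  shows "word_dist G S (p ! i) (p ! Suc i) \<le> 1"
proof -
  have sp: "set p \<subseteq> carrier G" using assms unfolding is_path_def by blast
  have pi: "p ! i \<in> carrier G" "p ! Suc i \<in> carrier G"
    using sp nth_mem[of i p] nth_mem[of "Suc i" p] assms(2) by auto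
  have "E (p ! i) (p ! Suc i)" using assms unfolding is_path_def by blast
  hence "is_path V E [p ! i, p ! Suc i]" using pi by simp
  from graph_dist_le_path[OF this]
  have "graph_dist V E (p ! i) (p ! Suc i) \<le> enat 1" by (simp add: path_length_def)
  then obtain n where n: "graph_dist V E (p ! i) (p ! Suc i) = enat n" "n \<le> 1"
    by (metis enat_ile enat_ord_simps(1))
  thus ?thesis using word_dist_eq[OF n(1)] by simp
qed

lemma path_reach:
  assumes "is_path V E p"
  shows "i < length p \<Longrightarrow> p ! i \<in> reach G S (hd p) i"
proof (induction i)
  case 0 then show ?case using assms by (simp add: hd_conv_nth is_path_def)
next
  case (Suc i)
  have "E (p ! i) (p ! Suc i)" using assms Suc.prems unfolding is_path_def by blast
  then obtain s where "s \<in> S" "p ! Suc i = p ! i \<otimes>\<^bsub>G\<^esub> s" unfolding cayley_edge_def by blast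
  then show ?case using Suc by auto
qed

lemma dist_reach:
  assumes "graph_dist V E x y \<le> enat n"
  shows "y \<in> reach G S x n"
proof -
  have "graph_dist V E x y \<noteq> \<infinity>" using enat_ile[OF assms] by auto
  then obtain p where p: "is_path V E p" "hd p = x" "last p = y"
    "graph_dist V E x y = enat (path_length p)" using graph_dist_attained by metis
  have ne: "p \<noteq> []" using p(1) unfolding is_path_def by simp
  have le: "length p - 1 \<le> n" using p(4) assms unfolding path_length_def by simp
  have "last p = p ! (length p - 1)" using ne by (simp add: last_conv_nth)
  hence "y \<in> reach G S x (length p - 1)" using path_reach[OF p(1), of "length p - 1"] ne p by simp
  thus ?thesis using reach_mono[OF le, of G S x] by blast
qed

end



locale qis = cay G S for G :: "('a, 'b) monoid_scheme" and S +
  fixes f :: "'a \<Rightarrow> complex" and Lq C :: real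
  assumes fH: "f ` carrier G \<subseteq> upper_half_plane" and Lq1: "Lq \<ge> 1" and C0: "C \<ge> 0"
    and lower: "\<And>x x'. x \<in> carrier G \<Longrightarrow> x' \<in> carrier G \<Longrightarrow>
                  word_dist G S x x' / Lq - C \<le> hyp_dist (f x) (f x')"
    and upper: "\<And>x x'. x \<in> carrier G \<Longrightarrow> x' \<in> carrier G \<Longrightarrow>
                  hyp_dist (f x) (f x') \<le> Lq * word_dist G S x x' + C"
    and dense: "\<And>y. y \<in> upper_half_plane \<Longrightarrow> \<exists>x\<in>carrier G. hyp_dist (f x) y \<le> C"
begin

lemma fIm: "x \<in> carrier G \<Longrightarrow> Im (f x) > 0"
  using fH unfolding upper_half_plane_def by auto

lemma word_from_hyp:
  assumes "x \<in> carrier G" "x' \<in> carrier G" "hyp_dist (f x) (f x') \<le> A"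
  shows "word_dist G S x x' \<le> Lq * (A + C)"
proof -
  have "word_dist G S x x' / Lq \<le> A + C" using lower[OF assms(1,2)] assms(3) by simp
  thus ?thesis using Lq1 by (simp add: divide_le_eq mult.commute)
qed

definition "qC = cosh C - 1"
definition "lC = 2 + 8 * qC"
definition "kC = 2 + 10 * qC"
definition "D = Lq + C"
definition "qD = cosh D - 1"
definition "lD = 2 + 8 * qD"
definition "kD = 2 + 10 * qD"
definition "bn = nat \<lceil>lC\<^sup>2\<rceil> + 2"
definition "bb = real bn"
definition "dd = 2 * kC + 1"
definition "M = nat \<lceil>kD * bb\<rceil> + 1"
definition "qB = (1 + (bb - 1)\<^sup>2) / 2"
definition "R = nat \<lceil>Lq * (arcosh (1 + qB) + C)\<rceil>"
definition "N = (card S + 1) ^ R"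

lemma qC0: "qC \<ge> 0" unfolding qC_def using cosh_real_ge_1[of C] by simp
lemma qD0: "qD \<ge> 0" unfolding qD_def using cosh_real_ge_1[of D] by simp
lemma lC2: "lC \<ge> 2" unfolding lC_def using qC0 by simp
lemma lD2: "lD \<ge> 2" unfolding lD_def using qD0 by simp
lemma kC2: "kC \<ge> 2" unfolding kC_def using qC0 by simp
lemma kD2: "kD \<ge> 2" unfolding kD_def using qD0 by simp
lemma D1: "D \<ge> 1" unfolding D_def using Lq1 C0 by simp
lemma bb_eq: "bb = real (nat \<lceil>lC\<^sup>2\<rceil>) + 2" unfolding bb_def bn_def by (simp only: of_nat_add of_nat_numeral)
lemma bb_gt: "bb > lC\<^sup>2" using bb_eq real_nat_ceiling_ge[of "lC\<^sup>2"] by linarith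
lemma bb2: "bb \<ge> 2"
proof -
  have "lC\<^sup>2 \<ge> 2\<^sup>2" by (rule power_mono) (use lC2 in auto)
  thus ?thesis using bb_gt by simp
qed
lemma dd_gt: "dd > 2 * kC" unfolding dd_def by simp
lemma bbpos: "bb ^ j > 0" using bb2 by simp

lemma hyp_C: "Im z > 0 \<Longrightarrow> Im w > 0 \<Longrightarrow> hyp_dist z w \<le> C \<Longrightarrow> hq z w \<le> qC"
  using hyp_le_iff[of z w C] C0 unfolding qC_def by simp

lemma hyp_D: "Im z > 0 \<Longrightarrow> Im w > 0 \<Longrightarrow> hyp_dist z w \<le> D \<Longrightarrow> hq z w \<le> qD"
  using hyp_le_iff[of z w D] D1 unfolding qD_def by simp

lemma hyp_from_hq:
  assumes "Im z > 0" "Im w > 0" "q \<ge> 0" "hq z w \<le> q"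
  shows "hyp_dist z w \<le> arcosh (1 + q)"
proof -
  have "arcosh (1 + q) \<ge> 0" using assms(3) by simp
  moreover have "cosh (arcosh (1 + q)) - 1 = q" using assms(3) by simp
  ultimately show ?thesis using hyp_le_iff[of z w "arcosh (1 + q)"] assms by simp
qed

lemma path_step_hq:
  assumes "is_path V E p" "Suc i < length p"
  shows "hq (f (p ! i)) (f (p ! Suc i)) \<le> qD"
proof -
  have sp: "set p \<subseteq> carrier G" using assms unfolding is_path_def by blast
  have pi: "p ! i \<in> carrier G" "p ! Suc i \<in> carrier G"
    using sp nth_mem[of i p] nth_mem[of "Suc i" p] assms(2) by auto
  have "Lq * word_dist G S (p ! i) (p ! Suc i) \<le> Lq * 1"
    using path_step_word[OF assms] Lq1 by (intro mult_left_mono) auto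
  hence "hyp_dist (f (p ! i)) (f (p ! Suc i)) \<le> Lq * 1 + C"
    using upper[OF pi] by linarith
  thus ?thesis using hyp_D fIm pi unfolding D_def by simp
qed

definition gpt :: "complex \<Rightarrow> 'a" where
  "gpt z = (SOME g. g \<in> carrier G \<and> hyp_dist (f g) z \<le> C)"

lemma gpt:
  assumes "Im z > 0"
  shows "gpt z \<in> carrier G" "hq (f (gpt z)) z \<le> qC"
proof -
  have "\<exists>g. g \<in> carrier G \<and> hyp_dist (f g) z \<le> C"
    using dense[of z] assms unfolding upper_half_plane_def by auto
  hence g: "gpt z \<in> carrier G \<and> hyp_dist (f (gpt z)) z \<le> C"
    unfolding gpt_def by (rule someI_ex)
  thus "gpt z \<in> carrier G" by simp
  show "hq (f (gpt z)) z \<le> qC" using hyp_C g fIm assms by blast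
qed

definition box :: "nat \<Rightarrow> int \<Rightarrow> complex \<Rightarrow> bool" where
  "box j s z \<longleftrightarrow> bb ^ j \<le> Im z \<and> Im z \<le> bb ^ Suc j \<and> \<bar>Re z - bb ^ j * of_int s\<bar> \<le> bb ^ j / 2"

lemma box_hq:
  assumes "box j s z" "box j s w"
  shows "hq z w \<le> qB"
proof -
  let ?u = "bb ^ j"
  have u: "?u > 0" by (rule bbpos)
  have bu: "bb ^ Suc j = bb * ?u" by simp
  have dx: "\<bar>Re z - Re w\<bar> \<le> ?u" using assms unfolding box_def by linarith
  have "Im z - Im w \<le> bb * ?u - ?u" "Im w - Im z \<le> bb * ?u - ?u"
    using assms bu unfolding box_def by linarith+
  hence dy: "\<bar>Im z - Im w\<bar> \<le> (bb - 1) * ?u" by (simp add: abs_le_iff algebra_simps)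
  have "\<bar>Re z - Re w\<bar>\<^sup>2 \<le> ?u\<^sup>2" by (rule power_mono[OF dx]) simp
  hence "(Re z - Re w)\<^sup>2 \<le> ?u\<^sup>2" by simp
  moreover have "(Im z - Im w)\<^sup>2 \<le> ((bb - 1) * ?u)\<^sup>2" using dy bb2
    by (metis abs_le_square_iff abs_of_nonneg  less_imp_le mult_pos_pos u diff_gt_0_iff_gt
        less_le_trans one_less_numeral_iff semiring_norm(76))
  ultimately have num: "(Re z - Re w)\<^sup>2 + (Im z - Im w)\<^sup>2 \<le> (1 + (bb-1)\<^sup>2) * ?u\<^sup>2"
    unfolding power_mult_distrib by (simp only: distrib_right mult_1; linarith)
  have den: "2 * ?u\<^sup>2 \<le> 2 * Im z * Im w"
  proof -
    have "?u * ?u \<le> Im z * Im w" using assms u unfolding box_def by (intro mult_mono) auto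
    thus ?thesis by (simp add: power2_eq_square)
  qed
  have "hq z w = ((Re z - Re w)\<^sup>2 + (Im z - Im w)\<^sup>2) / (2 * Im z * Im w)" by (rule hq_expand)
  also have "\<dots> \<le> ((1 + (bb-1)\<^sup>2) * ?u\<^sup>2) / (2 * ?u\<^sup>2)"
    using num den u bb2 by (intro frac_le) auto
  also have "\<dots> = qB" unfolding qB_def using u bb2 by simp
  finally show ?thesis .
qed

lemma level_exists:
  "1 \<le> y \<Longrightarrow> y \<le> bb ^ Suc L \<Longrightarrow> \<exists>j\<le>L. bb ^ j \<le> y \<and> y \<le> bb ^ Suc j"
proof (induction L)
  case 0 then show ?case by simp
next
  case (Suc L)
  show ?case
  proof (cases "bb ^ Suc L \<le> y")
    case True then show ?thesis using Suc.prems by auto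
  next
    case False
    then obtain j where "j \<le> L" "bb ^ j \<le> y" "y \<le> bb ^ Suc j" using Suc by force
    then show ?thesis by (intro exI[of _ j]) auto
  qed
qed

lemma cover:
  assumes "1 \<le> Im z" "Im z \<le> bb ^ Suc L" "\<bar>Re z\<bar> \<le> kD * Im z"
  shows "\<exists>j\<le>L. \<exists>s\<in>{- int M..int M}. box j s z"
proof -
  obtain j where j: "j \<le> L" "bb ^ j \<le> Im z" "Im z \<le> bb ^ Suc j"
    using level_exists[OF assms(1,2)] by blast
  let ?u = "bb ^ j"
  have u: "?u > 0" by (rule bbpos)
  define s where "s = round (Re z / ?u)"
  have r: "\<bar>of_int s - Re z / ?u\<bar> \<le> 1/2" unfolding s_def by (rule of_int_round_abs_le)
  hence "\<bar>?u * of_int s - Re z\<bar> \<le> ?u / 2"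
  proof -
    have "?u * of_int s - Re z = ?u * (of_int s - Re z / ?u)" using u bb2 by (simp add: field_simps)
    hence "\<bar>?u * of_int s - Re z\<bar> = ?u * \<bar>of_int s - Re z / ?u\<bar>" using u by (simp add: abs_mult)
    moreover have "?u * \<bar>of_int s - Re z / ?u\<bar> \<le> ?u * (1/2)"
      by (rule mult_left_mono[OF r]) (use u in simp)
    ultimately show ?thesis by simp
  qed
  hence "\<bar>Re z - ?u * of_int s\<bar> \<le> ?u / 2" by (simp add: abs_minus_commute)
  hence bx: "box j s z" using j unfolding box_def by simp
  have "\<bar>Re z / ?u\<bar> \<le> kD * bb"
  proof -
    have "kD * Im z \<le> kD * (bb ^ Suc j)" by (rule mult_left_mono[OF j(3)]) (use kD2 in simp)
    hence "\<bar>Re z\<bar> \<le> kD * (bb * ?u)" using assms(3) by simp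
    hence "\<bar>Re z\<bar> / ?u \<le> kD * bb" using u by (simp add: divide_le_eq algebra_simps)
    thus ?thesis using u by simp
  qed
  hence "\<bar>of_int s\<bar> \<le> kD * bb + 1/2" using r by linarith
  moreover have "kD * bb \<le> of_int \<lceil>kD * bb\<rceil>" by (rule le_of_int_ceiling)
  moreover have "real M = of_int \<lceil>kD * bb\<rceil> + 1"
  proof -
    have "0 \<le> kD * bb" using kD2 bb2 by simp
    thus ?thesis unfolding M_def by simp
  qed
  ultimately have "\<bar>of_int s\<bar> \<le> real M" by linarith
  hence "s \<in> {- int M..int M}" by (simp add: abs_le_iff; linarith)
  thus ?thesis using bx j by blast
qed

definition Fset :: "nat \<Rightarrow> 'a set" where
  "Fset L = {g \<in> carrier G. \<exists>j\<le>L. \<exists>s\<in>{- int M..int M}. box j s (f g)}"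

lemma Fb_card:
  "finite {g \<in> carrier G. box j s (f g)} \<and> card {g \<in> carrier G. box j s (f g)} \<le> N"
proof (cases "{g \<in> carrier G. box j s (f g)} = {}")
  case True then show ?thesis by (metis card.empty finite.emptyI zero_le)
next
  case False
  then obtain g0 where g0: "g0 \<in> carrier G" "box j s (f g0)" by blast
  have sub: "{g \<in> carrier G. box j s (f g)} \<subseteq> reach G S g0 R"
  proof
    fix g assume g: "g \<in> {g \<in> carrier G. box j s (f g)}"
    have "hq (f g0) (f g) \<le> qB" using box_hq g0 g by blast
    moreover have "qB \<ge> 0" unfolding qB_def by simp
    ultimately have "hyp_dist (f g0) (f g) \<le> arcosh (1 + qB)"
      using hyp_from_hq fIm g0 g by blast
    hence "word_dist G S g0 g \<le> Lq * (arcosh (1 + qB) + C)"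
      using word_from_hyp g0 g by blast
    hence "graph_dist V E g0 g \<le> enat R" unfolding R_def using word_le_graph g0 g by blast
    thus "g \<in> reach G S g0 R" by (rule dist_reach)
  qed
  have "finite (reach G S g0 R) \<and> card (reach G S g0 R) \<le> N"
    using reach_finite_card[OF S_fin] unfolding N_def by blast
  thus ?thesis using sub card_mono finite_subset by (metis order_trans)
qed

lemma F_card: "finite (Fset L) \<and> card (Fset L) \<le> (L + 1) * (2 * M + 1) * N"
proof -
  let ?I = "{..L} \<times> {- int M..int M}"
  have eq: "Fset L = (\<Union>js\<in>?I. {g \<in> carrier G. box (fst js) (snd js) (f g)})"
    unfolding Fset_def by force
  have fI: "finite ?I" by simp
  have cM: "card {- int M..int M} = 2 * M + 1" by (simp add: nat_add_distrib nat_mult_distrib)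
  have cI: "card ?I = (L + 1) * (2 * M + 1)" using cM by (simp add: card_cartesian_product)
  have "card (Fset L) \<le> (\<Sum>js\<in>?I. card {g \<in> carrier G. box (fst js) (snd js) (f g)})"
    unfolding eq by (rule card_UN_le[OF fI])
  also have "\<dots> \<le> (\<Sum>js\<in>?I. N)" using Fb_card by (intro sum_mono) blast
  also have "\<dots> = (L + 1) * (2 * M + 1) * N" using cI by simp
  finally show ?thesis using eq Fb_card fI by auto
qed


definition pt :: "nat \<Rightarrow> int \<Rightarrow> complex" where
  "pt j t = Complex (bb ^ j * dd * of_int t) (bb ^ j)"

lemma pt_simps[simp]: "Re (pt j t) = bb ^ j * dd * of_int t" "Im (pt j t) = bb ^ j"
  unfolding pt_def by simp_all

lemma gpt_pt: "gpt (pt j t) \<in> carrier G" "hq (f (gpt (pt j t))) (pt j t) \<le> qC"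
  using gpt[of "pt j t"] bbpos[of j] by simp_all

lemma near_pt:
  fixes j :: nat and t :: int
  defines "w \<equiv> f (gpt (pt j t))"
  shows "Im w \<le> lC * bb ^ j" "bb ^ j \<le> lC * Im w" "\<bar>Re w - bb ^ j * dd * of_int t\<bar> \<le> kC * bb ^ j"
    "Im w > 0"
proof -
  have w0: "Im w > 0" unfolding w_def using fIm gpt_pt by blast
  have h: "hq w (pt j t) \<le> qC" unfolding w_def using gpt_pt by blast
  note c = close[OF w0 _ qC0 h, simplified]
  show "Im w \<le> lC * bb ^ j" "bb ^ j \<le> lC * Im w" "\<bar>Re w - bb ^ j * dd * of_int t\<bar> \<le> kC * bb ^ j"
    using c bbpos[of j] unfolding lC_def kC_def by auto
  show "Im w > 0" by (rule w0)
qed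

lemma dd_pos: "dd > 0" using dd_gt kC2 by simp

lemma gpt_inj:
  assumes "gpt (pt j t) = gpt (pt j' t')"
  shows "j = j' \<and> t = t'"
proof -
  let ?w = "f (gpt (pt j t))"
  note n1 = near_pt[of j t] and n2 = near_pt[of j' t', folded assms]
  have lev: "bb ^ j \<le> lC\<^sup>2 * bb ^ j'" if n1: "bb ^ j \<le> lC * Im ?w" and n2: "Im ?w \<le> lC * bb ^ j'"
    for j j' t t'
  proof -
    have "lC * Im ?w \<le> lC * (lC * bb ^ j')" using n2 lC2 by (intro mult_left_mono) auto
    thus ?thesis using n1 by (simp add: power2_eq_square)
  qed
  have nolt: "\<not> j' < j" if "bb ^ j \<le> lC\<^sup>2 * bb ^ j'" for j j'
  proof
    assume "j' < j"
    then obtain q where q: "j = Suc q + j'" by (metis add_Suc less_iff_Suc_add add.commute)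
    have "bb ^ j = bb ^ Suc q * bb ^ j'" unfolding q by (simp add: power_add)
    moreover have "bb ^ Suc q \<ge> bb" using bb2 by (simp add: power_increasing[of 1 "Suc q"])
    moreover have "bb * bb ^ j' > lC\<^sup>2 * bb ^ j'" using bb_gt bbpos[of j'] by simp
    ultimately have "bb ^ j > lC\<^sup>2 * bb ^ j'"
      using bbpos[of j'] by (smt (verit) mult_right_mono)
    thus False using that by simp
  qed
  have "j = j'" using nolt[OF lev[OF n1(2) n2(1)]] nolt[OF lev[OF n2(2) n1(1)]] by simp
  then have jj: "j' = j" by simp
  let ?u = "bb ^ j"
  have u: "?u > 0" by (rule bbpos)
  have "\<bar>?u * dd * of_int t - ?u * dd * of_int t'\<bar> \<le> 2 * kC * ?u"
    using n1(3) n2(3) unfolding jj by (simp only: abs_le_iff; linarith)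
  moreover have "\<bar>?u * dd * of_int t - ?u * dd * of_int t'\<bar> = ?u * \<bar>dd * of_int (t - t')\<bar>"
  proof -
    have "?u * dd * of_int t - ?u * dd * of_int t' = ?u * (dd * of_int (t - t'))"
      by (simp add: algebra_simps)
    thus ?thesis using u by (simp add: abs_mult)
  qed
  ultimately have "?u * \<bar>dd * of_int (t - t')\<bar> \<le> ?u * (2 * kC)" by (simp add: mult.commute mult.left_commute)
  hence "\<bar>dd * of_int (t - t')\<bar> \<le> 2 * kC" using u by (simp only: mult_le_cancel_left_pos)
  hence "dd * \<bar>of_int (t - t')\<bar> < dd * 1" using dd_gt dd_pos by (simp only: abs_mult abs_of_pos; linarith)
  hence "\<bar>of_int (t - t') :: real\<bar> < 1" using dd_pos by (simp only: mult_less_cancel_left_pos)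
  hence "t = t'" by linarith
  thus ?thesis using \<open>j = j'\<close> by simp
qed

lemma sample_far:
  fixes j :: nat and t :: int
  assumes "dd * \<bar>of_int t\<bar> > kC + (real M + 1) * lC"
  defines "w \<equiv> f (gpt (pt j t))"
  shows "(t > 0 \<longrightarrow> Re w > 0) \<and> (t < 0 \<longrightarrow> Re w < 0) \<and>
         (\<forall>j' s. s \<in> {- int M..int M} \<longrightarrow> \<not> box j' s w)"
proof -
  let ?u = "bb ^ j"
  have u: "?u > 0" by (rule bbpos)
  note n = near_pt[of j t, folded w_def]
  have reZ: "\<bar>?u * dd * of_int t\<bar> = ?u * (dd * \<bar>of_int t\<bar>)"
    using u dd_pos by (simp add: abs_mult)
  have big: "?u * (dd * \<bar>of_int t\<bar>) > ?u * (kC + (real M + 1) * lC)"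
    using assms(1) u by simp
  have "(real M + 1) * Im w \<le> (real M + 1) * (lC * ?u)"
    using n(1) by (intro mult_left_mono) auto
  hence absw: "\<bar>Re w\<bar> > (real M + 1) * Im w"
    using n(3) reZ big by (simp add: algebra_simps abs_le_iff abs_if split: if_splits; linarith)
  have kpos: "kC * ?u \<ge> 0" using kC2 u by simp
  have s1: "t > 0 \<longrightarrow> Re w > 0"
  proof
    assume "t > 0"
    hence "?u * dd * of_int t = ?u * (dd * \<bar>of_int t\<bar>)" by simp
    moreover have "?u * (kC + (real M + 1) * lC) \<ge> kC * ?u"
      using u lC2 by (simp add: algebra_simps)
    ultimately show "Re w > 0" using n(3) big by (simp add: abs_le_iff; linarith)
  qed
  have s2: "t < 0 \<longrightarrow> Re w < 0"
  proof
    assume "t < 0"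
    hence "?u * dd * of_int t = - (?u * (dd * \<bar>of_int t\<bar>))" by simp
    moreover have "?u * (kC + (real M + 1) * lC) \<ge> kC * ?u"
      using u lC2 by (simp add: algebra_simps)
    ultimately show "Re w < 0" using n(3) big by (simp add: abs_le_iff; linarith)
  qed
  have s3: "\<not> box j' s w" if s: "s \<in> {- int M..int M}" for j' s
  proof
    assume b: "box j' s w"
    let ?v = "bb ^ j'"
    have v: "?v > 0" by (rule bbpos)
    have "\<bar>of_int s :: real\<bar> \<le> real M" using s by (simp add: abs_le_iff)
    hence "?v * \<bar>of_int s\<bar> \<le> ?v * real M" using v by (intro mult_left_mono) auto
    moreover have "\<bar>Re w - ?v * of_int s\<bar> \<le> ?v / 2" "?v \<le> Im w" using b unfolding box_def by auto
    moreover have "(real M + 1) * ?v \<le> (real M + 1) * Im w" using b unfolding box_def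
      by (intro mult_left_mono) auto
    moreover have "\<bar>?v * of_int s\<bar> = ?v * \<bar>of_int s\<bar>" using v by (simp add: abs_mult)
    moreover have "(real M + 1) * ?v = ?v * real M + ?v" by (simp add: algebra_simps)
    ultimately have "\<bar>Re w\<bar> \<le> (real M + 1) * Im w"
      by (simp only: abs_le_iff; linarith)
    thus False using absw by simp
  qed
  show ?thesis using s1 s2 s3 by blast
qed

lemma frac_aux: "U > 0 \<Longrightarrow> (Lm::real) > 0 \<Longrightarrow> (A * U) / (2 * (U / Lm)) = Lm * A / 2"
  by (simp add: field_simps)

lemma mu_hq:
  assumes "\<bar>of_int t\<bar> \<le> Tm"
  shows "hq (f (gpt (pt j t))) (f (gpt (pt j (- t)))) \<le>
          lC\<^sup>2 * ((2 * kC + 2 * dd * Tm)\<^sup>2 + lC\<^sup>2) / 2"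
proof -
  let ?w = "f (gpt (pt j t))" and ?w' = "f (gpt (pt j (- t)))" and ?u = "bb ^ j"
  let ?be = "2 * kC + 2 * dd * Tm"
  have u: "?u > 0" by (rule bbpos)
  note n1 = near_pt[of j t] and n2 = near_pt[of j "- t"]
  have X: "\<bar>?u * dd * of_int t\<bar> = dd * \<bar>of_int t\<bar> * ?u" using u dd_pos by (simp add: abs_mult)
  have m: "?u * dd * of_int (- t) = - (?u * dd * of_int t)" by simp
  have "\<bar>Re ?w - Re ?w'\<bar> \<le> kC * ?u + 2 * dd * \<bar>of_int t\<bar> * ?u + kC * ?u"
    using n1(3) n2(3) X abs_ge_self[of "?u * dd * of_int t"] abs_ge_minus_self[of "?u * dd * of_int t"]
    unfolding m by (simp only: abs_le_iff; linarith)
  also have "\<dots> \<le> ?be * ?u"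
  proof -
    have "dd * \<bar>of_int t\<bar> \<le> dd * Tm" using assms dd_pos by (intro mult_left_mono) auto
    hence "(dd * \<bar>of_int t\<bar>) * ?u \<le> (dd * Tm) * ?u" using u by (intro mult_right_mono) auto
    hence "2 * dd * \<bar>of_int t\<bar> * ?u \<le> 2 * dd * Tm * ?u" by (simp only: mult.assoc; simp)
    thus ?thesis by (simp add: algebra_simps)
  qed
  finally have dx: "\<bar>Re ?w - Re ?w'\<bar> \<le> ?be * ?u" .
  have dy: "\<bar>Im ?w - Im ?w'\<bar> \<le> lC * ?u" using n1(1,4) n2(1,4) by (simp add: abs_le_iff)
  have "(Re ?w - Re ?w')\<^sup>2 \<le> (?be * ?u)\<^sup>2"
  proof -
    have "\<bar>Re ?w - Re ?w'\<bar>\<^sup>2 \<le> (?be * ?u)\<^sup>2" by (rule power_mono[OF dx]) simp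
    thus ?thesis by simp
  qed
  moreover have "(Im ?w - Im ?w')\<^sup>2 \<le> (lC * ?u)\<^sup>2"
  proof -
    have "\<bar>Im ?w - Im ?w'\<bar>\<^sup>2 \<le> (lC * ?u)\<^sup>2" by (rule power_mono[OF dy]) simp
    thus ?thesis by simp
  qed
  ultimately have num: "(Re ?w - Re ?w')\<^sup>2 + (Im ?w - Im ?w')\<^sup>2 \<le> (?be\<^sup>2 + lC\<^sup>2) * ?u\<^sup>2"
    unfolding power_mult_distrib by (simp only: distrib_right; linarith)
  have l0: "lC > 0" using lC2 by simp
  have den: "2 * (?u\<^sup>2 / lC\<^sup>2) \<le> 2 * Im ?w * Im ?w'"
  proof -
    have a: "?u / lC \<le> Im ?w" "?u / lC \<le> Im ?w'" using n1(2) n2(2) l0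
      by (simp_all add: divide_le_eq mult.commute)
    have "(?u / lC) * (?u / lC) \<le> Im ?w * Im ?w'"
      using a u l0 n1(4) by (intro mult_mono) auto
    thus ?thesis by (simp add: power2_eq_square)
  qed
  have u2: "0 < ?u\<^sup>2" using u by (rule zero_less_power)
  have l2: "0 < lC\<^sup>2" using l0 by (rule zero_less_power)
  have dpos: "0 < 2 * (?u\<^sup>2 / lC\<^sup>2)" using divide_pos_pos[OF u2 l2] by linarith
  have "hq ?w ?w' = ((Re ?w - Re ?w')\<^sup>2 + (Im ?w - Im ?w')\<^sup>2) / (2 * Im ?w * Im ?w')"
    by (rule hq_expand)
  also have "\<dots> \<le> ((?be\<^sup>2 + lC\<^sup>2) * ?u\<^sup>2) / (2 * (?u\<^sup>2 / lC\<^sup>2))"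
    using num den dpos by (intro frac_le) auto
  also have "\<dots> = lC\<^sup>2 * (?be\<^sup>2 + lC\<^sup>2) / 2" by (rule frac_aux[OF u2 l2])
  finally show ?thesis .
qed


lemma disc_ivt: "P (0::nat) \<Longrightarrow> \<not> P n \<Longrightarrow> \<exists>i<n. P i \<and> \<not> P (Suc i)"
proof (induction n)
  case 0 then show ?case by simp
next
  case (Suc n)
  then show ?case by (cases "P n") (auto intro: less_SucI)
qed

lemma far_T0:
  assumes "dd * real T0 \<ge> kC + (real M + 1) * lC + dd" "int T0 \<le> \<bar>t\<bar>"
  shows "dd * \<bar>of_int t\<bar> > kC + (real M + 1) * lC"
proof -
  have "real T0 \<le> \<bar>of_int t\<bar>" using assms(2) by linarith
  hence "dd * real T0 \<le> dd * \<bar>of_int t\<bar>" using dd_pos by (intro mult_left_mono) auto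
  thus ?thesis using assms(1) dd_pos by linarith
qed

lemma path_long:
  fixes e H L j j' :: nat and t t' :: int and p :: "'a list"
  assumes be: "bb ^ e > lC * lD ^ r" and L: "2 * e + H \<le> L"
    and j: "e \<le> j" "j < e + H"
    and t: "t > 0" "dd * \<bar>of_int t\<bar> > kC + (real M + 1) * lC"
    and t': "t' < 0" "dd * \<bar>of_int t'\<bar> > kC + (real M + 1) * lC"
    and p: "is_path V E p" "hd p = gpt (pt j t)" "last p = gpt (pt j' t')"
    and pF: "set p \<inter> Fset L = {}"
  shows "path_length p \<ge> r"
proof -
  define n where "n = length p - 1"
  define z where "z i = f (p ! i)" for i
  have ne: "p \<noteq> []" using p unfolding is_path_def by simp
  have sp: "set p \<subseteq> carrier G" using p unfolding is_path_def by blast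
  have pc: "p ! i \<in> carrier G" if "i \<le> n" for i
  proof -
    have "i < length p" using that ne unfolding n_def by (cases p) auto
    thus ?thesis using sp nth_mem[of i p] by blast
  qed
  have zIm: "Im (z i) > 0" if "i \<le> n" for i using fIm pc[OF that] unfolding z_def by blast
  have z0: "z 0 = f (gpt (pt j t))" unfolding z_def using p(2) ne by (simp add: hd_conv_nth)
  have zn: "z n = f (gpt (pt j' t'))" unfolding z_def n_def using p(3) ne by (simp add: last_conv_nth)
  have re0: "Re (z 0) > 0" using sample_far[OF t(2), of j] t(1) z0 by simp
  have ren: "\<not> Re (z n) > 0" using sample_far[OF t'(2), of j'] t'(1) zn by simp
  obtain i where i: "i < n" "Re (z i) > 0" "\<not> Re (z (Suc i)) > 0"
    using disc_ivt[of "\<lambda>i. Re (z i) > 0", OF re0 ren] by blast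
  have step: "hq (z l) (z (Suc l)) \<le> qD" if "l < n" for l
    unfolding z_def using path_step_hq[OF p(1)] that unfolding n_def by simp
  have stepc: "Im (z (Suc l)) \<le> lD * Im (z l) \<and> Im (z l) \<le> lD * Im (z (Suc l))
      \<and> \<bar>Re (z l) - Re (z (Suc l))\<bar> \<le> kD * Im (z l)" if "l < n" for l
    using close[OF zIm zIm qD0 step[OF that]] that unfolding lD_def kD_def by simp
  have "Re (z i) \<le> kD * Im (z i)" using stepc[OF i(1)] i(3) by (simp add: abs_le_iff)
  hence absz: "\<bar>Re (z i)\<bar> \<le> kD * Im (z i)" using i(2) by simp
  have "i < length p" using i(1) unfolding n_def by simp
  hence notF: "p ! i \<notin> Fset L" using pF nth_mem[of i p] by blast
  have "\<not> (\<exists>j\<le>L. \<exists>s\<in>{- int M..int M}. box j s (z i))"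
    using notF pc[of i] i(1) unfolding Fset_def z_def by auto
  hence out: "Im (z i) < 1 \<or> Im (z i) > bb ^ Suc L" using cover[of "z i" L] absz by force
  have lD1: "lD > 1" using lD2 by simp
  have chain: "Im (z l) \<le> lD ^ l * Im (z 0) \<and> Im (z 0) \<le> lD ^ l * Im (z l)" if "l \<le> n" for l
    using that
  proof (induction l)
    case 0 then show ?case by simp
  next
    case (Suc l)
    have IH: "Im (z l) \<le> lD ^ l * Im (z 0)" "Im (z 0) \<le> lD ^ l * Im (z l)" using Suc by auto
    have s: "Im (z (Suc l)) \<le> lD * Im (z l)" "Im (z l) \<le> lD * Im (z (Suc l))"
      using stepc[of l] Suc.prems by auto
    have "Im (z (Suc l)) \<le> lD * (lD ^ l * Im (z 0))"
      using s(1) IH(1) lD1 by (smt (verit, best) mult_left_mono)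
    moreover have "Im (z 0) \<le> lD ^ l * (lD * Im (z (Suc l)))"
      using s(2) IH(2) lD1 by (smt (verit, best) mult_left_mono zero_le_power)
    ultimately show ?case by (simp add: algebra_simps)
  qed
  note ch = chain[of i] i(1)
  note nz = near_pt[of j t, folded z0]
  have Y: "bb ^ e \<le> bb ^ j" "bb ^ j \<le> bb ^ (e + H)" using j bb2 by (simp_all add: power_increasing)
  have lpos: "lC > 0" using lC2 by simp
  have "lD ^ r < lD ^ i"
  proof (cases "Im (z i) < 1")
    case True
    have "Im (z 0) \<le> lD ^ i * Im (z i)" using ch by simp
    also have "\<dots> < lD ^ i" using True lD1 by simp
    finally have "lC * Im (z 0) < lC * lD ^ i" using lpos by simp
    hence "bb ^ e < lC * lD ^ i" using nz(2) Y(1) by linarith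
    hence "lC * lD ^ r < lC * lD ^ i" using be by linarith
    thus ?thesis using lpos by simp
  next
    case False
    hence big: "Im (z i) > bb ^ Suc L" using out by simp
    have "bb ^ Suc L \<ge> bb ^ (e + (e + H))" using L bb2 by (intro power_increasing) auto
    hence "bb ^ Suc L \<ge> bb ^ e * bb ^ (e + H)" by (simp add: power_add)
    moreover have "Im (z i) \<le> lD ^ i * (lC * bb ^ (e + H))"
    proof -
      have "Im (z 0) \<le> lC * bb ^ (e + H)" using nz(1) Y(2) lpos by (smt (verit) mult_left_mono)
      hence "lD ^ i * Im (z 0) \<le> lD ^ i * (lC * bb ^ (e + H))" using lD1 by (intro mult_left_mono) auto
      thus ?thesis using ch by simp
    qed
    ultimately have "bb ^ e * bb ^ (e + H) < (lC * lD ^ i) * bb ^ (e + H)" using big by (simp add: algebra_simps)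
    hence "bb ^ e < lC * lD ^ i" using bbpos[of "e + H"] by simp
    hence "lC * lD ^ r < lC * lD ^ i" using be by linarith
    thus ?thesis using lpos by simp
  qed
  hence "r < i" using lD1 power_less_imp_less_exp by blast
  thus ?thesis using i(1) unfolding path_length_def n_def by simp
qed


lemma extra: "extraterrestrial_graph V E"
  unfolding extraterrestrial_graph_def
proof (intro allI)
  fix m :: nat
  define T :: nat where "T = 2 * m * (2 * M + 1) * N + 1"
  define X where "X = kC + (real M + 1) * lC"
  define T0 :: nat where "T0 = nat \<lceil>X / dd\<rceil> + 1"
  define Tm where "Tm = real (T0 + T)"
  define qk where "qk = lC\<^sup>2 * ((2 * kC + 2 * dd * Tm)\<^sup>2 + lC\<^sup>2) / 2"
  define k where "k = nat \<lceil>Lq * (arcosh (1 + qk) + C)\<rceil>"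
  have T0X: "dd * real T0 \<ge> X + dd"
  proof -
    have "X / dd \<le> real (nat \<lceil>X / dd\<rceil>)" by (rule real_nat_ceiling_ge)
    hence "X / dd + 1 \<le> real T0" unfolding T0_def by simp
    hence "dd * (X / dd + 1) \<le> dd * real T0" using dd_pos by (intro mult_left_mono) auto
    thus ?thesis using dd_pos by (simp add: algebra_simps)
  qed
  have qk0: "qk \<ge> 0" unfolding qk_def by simp
  show "\<exists>k. \<forall>r. \<exists>U F Ou \<mu>. U \<subseteq> V \<and> F \<subseteq> V \<and> Ou \<subseteq> V \<and> finite U \<and> finite F \<and> finite Ou \<and>
       U \<inter> F = {} \<and> U \<inter> Ou = {} \<and> F \<inter> Ou = {} \<and>
       U \<noteq> {} \<and> card U \<ge> m * card F \<and>
       bij_betw \<mu> U Ou \<and> (\<forall>u\<in>U. graph_dist V E u (\<mu> u) \<le> enat k) \<and>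
       (\<forall>p. is_path V E p \<and> hd p \<in> U \<and> last p \<in> Ou \<longrightarrow>
              set p \<inter> F \<noteq> {} \<or> path_length p \<ge> r)"
  proof (rule exI[of _ k], rule allI)
    fix r :: nat
    have "1 < bb" using bb2 by simp
    then obtain e where be: "lC * lD ^ r < bb ^ e" using real_arch_pow by blast
    define H where "H = 2 * e + 1"
    define L where "L = 2 * e + H"
    define I where "I = {e..<e + H} \<times> {int T0..<int T0 + int T}"
    define P where "P = (\<lambda>(j, t). gpt (pt j t))"
    define Q where "Q = (\<lambda>(j, t). gpt (pt j (- t)))"
    define U where "U = P ` I"
    define Ou where "Ou = Q ` I"
    define F where "F = Fset L"
    define mu where "mu = (\<lambda>g. Q (inv_into I P g))"
    have fI: "finite I" unfolding I_def by simp
    have cI: "card I = H * T" unfolding I_def by (simp add: card_cartesian_product)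
    have Ipos: "\<And>j t. (j, t) \<in> I \<Longrightarrow> t > 0 \<and> e \<le> j \<and> j < e + H \<and> \<bar>of_int t\<bar> \<le> Tm
         \<and> dd * \<bar>of_int t\<bar> > X \<and> dd * \<bar>of_int (- t)\<bar> > X"
    proof -
      fix j t assume jt: "(j, t) \<in> I"
      hence t: "int T0 \<le> t" "t < int T0 + int T" "e \<le> j" "j < e + H" unfolding I_def by auto
      have "T0 \<ge> 1" unfolding T0_def by simp
      hence tp: "t > 0" using t by linarith
      have "\<bar>of_int t\<bar> \<le> Tm" unfolding Tm_def using t tp by simp
      moreover have "dd * \<bar>of_int t\<bar> > X" using far_T0[OF _ , of T0 t] T0X t tp unfolding X_def by simp
      ultimately show "t > 0 \<and> e \<le> j \<and> j < e + H \<and> \<bar>of_int t\<bar> \<le> Tm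
         \<and> dd * \<bar>of_int t\<bar> > X \<and> dd * \<bar>of_int (- t)\<bar> > X" using tp t by simp
    qed
    have injP: "inj_on P I" unfolding inj_on_def P_def using gpt_inj by auto
    have injQ: "inj_on Q I" unfolding inj_on_def Q_def by (auto dest!: gpt_inj)
    have PV: "P x \<in> carrier G" "Q x \<in> carrier G" for x
      unfolding P_def Q_def using gpt_pt by (auto split: prod.splits)
    have farP: "\<not> box j' s (f (P x))" "\<not> box j' s (f (Q x))"
      if "x \<in> I" "s \<in> {- int M..int M}" for x j' s
    proof -
      obtain j t where x: "x = (j, t)" by (cases x)
      have h: "dd * \<bar>of_int t\<bar> > X" "dd * \<bar>of_int (- t)\<bar> > X" using Ipos that x by auto
      show "\<not> box j' s (f (P x))" using sample_far[of t j] h that unfolding X_def x P_def by auto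
      show "\<not> box j' s (f (Q x))" using sample_far[of "- t" j] h that unfolding X_def x Q_def by auto
    qed
    have UF: "U \<inter> F = {}" unfolding U_def F_def Fset_def using farP by blast
    have OF: "F \<inter> Ou = {}" unfolding Ou_def F_def Fset_def using farP by blast
    have UO: "U \<inter> Ou = {}"
    proof -
      have "P x \<noteq> Q y" if "x \<in> I" "y \<in> I" for x y
      proof
        assume eq: "P x = Q y"
        obtain j t where x: "x = (j, t)" by (cases x)
        obtain j' t' where y: "y = (j', t')" by (cases y)
        have "t = - t'" using gpt_inj eq unfolding x y P_def Q_def by auto
        moreover have "t > 0" using Ipos[of j t] that x by simp
        moreover have "t' > 0" using Ipos[of j' t'] that y by simp
        ultimately show False by simp
      qed
      thus ?thesis unfolding U_def Ou_def by blast
    qed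
    have FC: "finite F \<and> card F \<le> (L + 1) * (2 * M + 1) * N" unfolding F_def by (rule F_card)
    have cU: "card U = H * T" unfolding U_def using card_image[OF injP] cI by simp
    have "m * card F \<le> m * ((L + 1) * (2 * M + 1) * N)" using FC by simp
    also have "\<dots> = H * (2 * m * (2 * M + 1) * N)" unfolding L_def H_def by (simp add: algebra_simps)
    also have "\<dots> \<le> H * T" unfolding T_def by simp
    finally have mF: "m * card F \<le> card U" using cU by simp
    have Une: "U \<noteq> {}"
    proof -
      have "T \<ge> 1" unfolding T_def by simp
      hence "(e, int T0) \<in> I" unfolding I_def H_def by simp
      thus ?thesis unfolding U_def by blast
    qed
    have bij: "bij_betw mu U Ou"
    proof -
      have b1: "bij_betw (inv_into I P) U I" unfolding U_def by (rule bij_betw_inv_into[OF inj_on_imp_bij_betw[OF injP]])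
      have b2: "bij_betw Q I Ou" unfolding Ou_def by (rule inj_on_imp_bij_betw[OF injQ])
      show ?thesis unfolding mu_def using bij_betw_trans[OF b1 b2] by (simp add: comp_def)
    qed
    have dist: "graph_dist V E u (mu u) \<le> enat k" if uU: "u \<in> U" for u
    proof -
      obtain x where x: "x \<in> I" "u = P x" using uU unfolding U_def by blast
      obtain j t where jt: "x = (j, t)" by (cases x)
      have mu: "mu u = Q x" unfolding mu_def using x injP by (simp add: inv_into_f_f)
      have tb: "\<bar>of_int t\<bar> \<le> Tm" using Ipos x jt by blast
      have e1: "u = gpt (pt j t)" "mu u = gpt (pt j (- t))" using x(2) mu jt unfolding P_def Q_def by simp_all
      have "hq (f u) (f (mu u)) \<le> qk" unfolding qk_def e1(2) unfolding e1(1) by (rule mu_hq[OF tb])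
      hence "hyp_dist (f u) (f (mu u)) \<le> arcosh (1 + qk)" using hyp_from_hq fIm PV qk0 x mu by metis
      hence "word_dist G S u (mu u) \<le> Lq * (arcosh (1 + qk) + C)" using word_from_hyp PV x mu by metis
      thus ?thesis unfolding k_def using word_le_graph PV x mu by metis
    qed
    have paths: "set p \<inter> F \<noteq> {} \<or> path_length p \<ge> r"
      if pp: "is_path V E p" "hd p \<in> U" "last p \<in> Ou" for p
    proof (cases "set p \<inter> F = {}")
      case True
      obtain x where x: "x \<in> I" "hd p = P x" using pp unfolding U_def by blast
      obtain y where y: "y \<in> I" "last p = Q y" using pp unfolding Ou_def by blast
      obtain j t where jt: "x = (j, t)" by (cases x)
      obtain j' t' where jt': "y = (j', t')" by (cases y)
      have a: "t > 0" "e \<le> j" "j < e + H" "dd * \<bar>of_int t\<bar> > X" using Ipos x jt by auto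
      have b: "- t' < 0" "dd * \<bar>of_int (- t')\<bar> > X" using Ipos y jt' by auto
      have "path_length p \<ge> r"
        by (rule path_long[where L=L and j=j and t=t and j'=j' and t'="-t'" and H=H and e=e and p=p])
           (use be a b pp True x y jt jt' in \<open>auto simp: L_def P_def Q_def F_def X_def\<close>)
      thus ?thesis by simp
    qed simp
    show "\<exists>U F Ou \<mu>. U \<subseteq> V \<and> F \<subseteq> V \<and> Ou \<subseteq> V \<and> finite U \<and> finite F \<and> finite Ou \<and>
       U \<inter> F = {} \<and> U \<inter> Ou = {} \<and> F \<inter> Ou = {} \<and>
       U \<noteq> {} \<and> card U \<ge> m * card F \<and>
       bij_betw \<mu> U Ou \<and> (\<forall>u\<in>U. graph_dist V E u (\<mu> u) \<le> enat k) \<and>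
       (\<forall>p. is_path V E p \<and> hd p \<in> U \<and> last p \<in> Ou \<longrightarrow>
              set p \<inter> F \<noteq> {} \<or> path_length p \<ge> r)"
    proof (intro exI conjI)
      show "U \<subseteq> V" unfolding U_def using PV by blast
      show "F \<subseteq> V" unfolding F_def Fset_def by blast
      show "Ou \<subseteq> V" unfolding Ou_def using PV by blast
      show "finite U" unfolding U_def using fI by simp
      show "finite F" using FC by simp
      show "finite Ou" unfolding Ou_def using fI by simp
    qed (use UF UO OF Une mF bij dist paths in auto)
  qed
qed

end


theorem mainTheorem16:
  fixes G :: "('a, 'b) monoid_scheme"
  assumes "finitely_generated_group G"
    and "\<exists>S. finite_symm_gen_set G S \<and>
           quasi_isometric (carrier G) (word_dist G S) upper_half_plane hyp_dist"
  shows "extraterrestrial_group G"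
proof -
  obtain S where S: "finite_symm_gen_set G S"
    and qi: "quasi_isometric (carrier G) (word_dist G S) upper_half_plane hyp_dist"
    using assms(2) by blast
  have grp: "group G" using assms(1) unfolding finitely_generated_group_def by blast
  obtain f Lq C where f: "f ` carrier G \<subseteq> upper_half_plane" "Lq \<ge> 1" "C \<ge> 0"
    and b: "\<forall>x\<in>carrier G. \<forall>x'\<in>carrier G. word_dist G S x x' / Lq - C \<le> hyp_dist (f x) (f x') \<and>
                          hyp_dist (f x) (f x') \<le> Lq * word_dist G S x x' + C"
    and d: "\<forall>y\<in>upper_half_plane. \<exists>x\<in>carrier G. hyp_dist (f x) y \<le> C"
    using qi unfolding quasi_isometric_def by blast
  have "qis G S f Lq C" unfolding qis_def qis_axioms_def cay_def using grp S f b d by auto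
  then interpret qis G S f Lq C .
  have "extraterrestrial_graph (carrier G) (cayley_edge G S)" by (rule extra)
  thus ?thesis unfolding extraterrestrial_group_def using S by blast
qed

end
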